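(* Let $\mathcal X$ (inputs) and $\mathcal Y$ (labels) be standard Borel spaces. Let $(X,Y)$ have a joint "retain" law whose $X$-marginal is $p^r$, and let $\eta_x:=\mathcal L(Y\mid X=x)$ be its regular conditional law. Let $p^u$ be a probability measure on $\mathcal X$, $\alpha\in(0,1]$, and $p^d:=(1-\alpha)p^r+\alpha p^u$. Let $\mathcal H$ be a measurable space and $Q:\mathcal H\times\mathcal X\to\mathcal P(\mathcal Y)$, $(\theta,x)\mapsto Q_\theta(\cdot\mid x)$, a Markov kernel (the predictive distribution of model $\theta$). For an $\mathcal H$-valued random element $\Theta$ and a probability measure $p$ on $\mathcal X$, let $\mu_\Theta^p$ denote the law of $\hat Y$ where $X\sim p$ is independent of $\Theta$ and, conditionally on $(\Theta,X)$, $\hat Y\sim Q_\Theta(\cdot\mid X)$. Define the (averaged) log-loss regret $$\overline{\mathrm{reg}}_{\log}(\Theta):=\mathbb E_\Theta\int_{\mathcal X}D_{\mathrm{KL}}\big(\eta_x\,\Vert\,Q_\Theta(\cdot\mid x)\big)\,p^r(dx).$$ Let $\pi\in(0,1)$ and let $(X_{\mathrm{margin}},Z)$ satisfy $Z\sim\mathrm{Bernoulli}(\pi)$, $\mathcal L(X_{\mathrm{margin}}\mid Z=1)=p^r$, $\mathcal L(X_{\mathrm{margin}}\mid Z=0)=p^d$. Let $\Theta_u,\Theta_r$ be $\mathcal H$-valued random elements, with $\Theta_u$ independent of $(X_{\mathrm{margin}},Z)$, and let $\hat Y_{\mathrm{margin}}$ satisfy $\hat Y_{\mathrm{margin}}\mid(\Theta_u,X_{\mathrm{margin}},Z)\sim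 Q_{\Theta_u}(\cdot\mid X_{\mathrm{margin}})$. Assume $\overline{\mathrm{reg}}_{\log}(\Theta_u)\le\delta$, $\overline{\mathrm{reg}}_{\log}(\Theta_r)\le\delta_g$, and $I(\hat Y_{\mathrm{margin}};Z)\le\varepsilon_u$. Then $$\mathrm{TV}\big(\mu_{\Theta_u}^{p^d},\mu_{\Theta_r}^{p^d}\big)\le\sqrt{\tfrac12}\big(\sqrt\delta+\sqrt{\delta_g}\big)+\sqrt{\frac{\varepsilon_u}{2\pi(1-\pi)}}+\mathrm{TV}\big(\mu_{\Theta_r}^{p^r},\mu_{\Theta_r}^{p^d}\big).$$
   Context: $\mathrm{TV}(P,Q)=\sup_A|P(A)-Q(A)|$. $D_{\mathrm{KL}}$ is Kullback–Leibler divergence and $I$ is mutual information; both computed with the same logarithm base (base 2 in the paper; the bound also holds with natural logarithms). Interpretation: $\Theta_u$ is the unlearned model, $\Theta_r$ the model retrained on the retain set, $p^r$ the retain distribution, $p^u$ the unlearn distribution. *)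

theory Defs
  imports "HOL-Probability.Probability"
begin

definition TV :: "'a measure \<Rightarrow> 'a measure \<Rightarrow> real" where
  "TV P Q = (SUP A\<in>sets P. \<bar>measure P A - measure Q A\<bar>)"

(* With f = dP/dQ we use
   D(P||Q) = \<integral> (f ln f - f + 1) dQ, whose integrand is nonnegative
   (and equals \<integral> f ln f dQ since \<integral> f dQ = 1). *)
definition KL_div :: "'a measure \<Rightarrow> 'a measure \<Rightarrow> ennreal" where
  "KL_div P Q =
     (if absolutely_continuous Q P then
        (\<integral>\<^sup>+ x. ennreal (let f = enn2real (RN_deriv Q P x) in f * ln f - f + 1) \<partial>Q)
      else \<infinity>)"

definition mutual_info :: "'a measure \<Rightarrow> 'b measure \<Rightarrow> ('a \<times> 'b) measure \<Rightarrow> ennreal" where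
  "mutual_info M1 M2 J = KL_div J (distr J M1 fst \<Otimes>\<^sub>M distr J M2 snd)"

definition mix_measure :: "real \<Rightarrow> 'a measure \<Rightarrow> 'a measure \<Rightarrow> 'a measure" where
  "mix_measure a M N = measure_of (space M) (sets M)
     (\<lambda>A. ennreal (1 - a) * emeasure M A + ennreal a * emeasure N A)"

definition pred_law :: "'h measure \<Rightarrow> 'x measure \<Rightarrow> ('h \<times> 'x \<Rightarrow> 'y measure) \<Rightarrow> 'y measure" where
  "pred_law P\<Theta> p Q = (P\<Theta> \<Otimes>\<^sub>M p) \<bind> Q"

definition avg_reg_log :: "'h measure \<Rightarrow> 'x measure \<Rightarrow> ('x \<Rightarrow> 'y measure) \<Rightarrow> ('h \<times> 'x \<Rightarrow> 'y measure) \<Rightarrow> ennreal" where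
  "avg_reg_log P\<Theta> pr \<eta> Q = (\<integral>\<^sup>+ \<theta>. (\<integral>\<^sup>+ x. KL_div (\<eta> x) (Q (\<theta>, x)) \<partial>pr) \<partial>P\<Theta>)"

definition margin_joint :: "real \<Rightarrow> 'h measure \<Rightarrow> 'x measure \<Rightarrow> 'x measure \<Rightarrow> 'y measure
     \<Rightarrow> ('h \<times> 'x \<Rightarrow> 'y measure) \<Rightarrow> ('y \<times> bool) measure" where
  "margin_joint \<pi> P\<Theta> pr pd MY Q =
     measure_pmf (bernoulli_pmf \<pi>) \<bind>
       (\<lambda>z. distr (pred_law P\<Theta> (if z then pr else pd) Q) (MY \<Otimes>\<^sub>M count_space UNIV) (\<lambda>y. (y, z)))"

end

theory Submission
  imports Defs
begin

lemma ln_lower_aux: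
  fixes t :: real assumes t: "0 < t"
  shows "(t-1)*(5*t + 1)/(2*t*(t+2)) \<le> ln t"
proof -
  define g where "g x = ln x - (x-1)*(5*x + 1)/(2*x*(x+2))" for x :: real
  have d: "(g has_real_derivative (x-1)^3/(x^2*(x+2)^2)) (at x)" if "0 < x" for x
  proof -
    have nz: "x * 4 + x * (x * 2) \<noteq> 0" using that by (smt (verit) mult_pos_pos)
    have "(g has_real_derivative (1/x - ((10*x - 4)*(2*x*(x+2)) - (x-1)*(5*x + 1)*(4*x+4))/(2*x*(x+2))^2)) (at x)"
      unfolding g_def using that nz
      by (auto intro!: derivative_eq_intros simp: algebra_simps power2_eq_square)
    moreover have "1/x - ((10*x - 4)*(2*x*(x+2)) - (x-1)*(5*x + 1)*(4*x+4))/(2*x*(x+2))^2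
        = (x-1)^3/(x^2*(x+2)^2)"
    proof -
      have a: "x \<noteq> 0" "x + 2 \<noteq> 0" using that by auto
      have "(2*x*(x+2))^2 = 4*(x^2*(x+2)^2)" by (simp add: power2_eq_square)
      then show ?thesis using a
        by (simp add: divide_simps) (simp add: algebra_simps power2_eq_square power3_eq_cube)
    qed
    ultimately show ?thesis by simp
  qed
  have g1: "g 1 = 0" by (simp add: g_def)
  show ?thesis
  proof (cases "1 \<le> t")
    case True
    have "g 1 \<le> g t"
      by (rule deriv_nonneg_imp_mono[where a=1 and b=t and g=g and g'="\<lambda>x. (x-1)^3/(x^2*(x+2)^2)"])
         (use True in \<open>auto intro!: d\<close>)
    thus ?thesis using g1 by (simp add: g_def)
  next
    case False
    have "g 1 \<le> g t"
    proof (rule deriv_nonpos_imp_antimono[where a=t and b=1 and g=g and g'="\<lambda>x. (x-1)^3/(x^2*(x+2)^2)"])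
      fix x assume x: "x \<in> {t..1}"
      show "(g has_real_derivative (x-1)^3/(x^2*(x+2)^2)) (at x)" using x t by (auto intro!: d)
      have e: "(x-1)^3 = -((1-x)^3)" by (simp add: power3_eq_cube algebra_simps)
      have "0 \<le> (1-x)^3" using x by simp
      hence "(x-1)^3 \<le> 0" using e by linarith
      then show "(x-1)^3/(x^2*(x+2)^2) \<le> 0" by (simp add: divide_nonpos_nonneg)
    qed (use False in auto)
    thus ?thesis using g1 by (simp add: g_def)
  qed
qed

lemma phi_ineq:
  fixes t b :: real assumes t: "0 \<le> t"
  shows "b*(t-1) - b^2*(t+2)/6 \<le> t * ln t - t + 1"
proof (cases "t = 0")
  case True
  have "0 \<le> (b + 3/2)^2/3" by simp
  then show ?thesis using True by (simp add: power2_eq_square algebra_simps)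
next
  case False
  hence tp: "0 < t" using t by simp
  have q: "b*(t-1) - b^2*(t+2)/6 \<le> 3*(t-1)^2/(2*(t+2))"
  proof -
    have "0 \<le> (t+2)/6 * (b - 3*(t-1)/(t+2))^2" using tp by simp
    also have "(t+2)/6 * (b - 3*(t-1)/(t+2))^2 = 3*(t-1)^2/(2*(t+2)) - (b*(t-1) - b^2*(t+2)/6)"
    proof -
      have a: "t + 2 \<noteq> 0" using tp by simp
      show ?thesis using a by (simp add: divide_simps power2_eq_square) (simp add: algebra_simps)
    qed
    finally show ?thesis by simp
  qed
  have "t * ((t-1)*(5*t + 1)/(2*t*(t+2))) \<le> t * ln t"
    using mult_left_mono[OF ln_lower_aux[OF tp], of t] tp by simp
  moreover have "t * ((t-1)*(5*t + 1)/(2*t*(t+2))) - t + 1 = 3*(t-1)^2/(2*(t+2))"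
  proof -
    have a: "t + 2 \<noteq> 0" "t \<noteq> 0" using tp by auto
    show ?thesis using a by (simp add: divide_simps power2_eq_square) (simp add: algebra_simps)
  qed
  ultimately show ?thesis using q by linarith
qed

lemma ennreal_integral_le_nn:
  fixes f :: "'a \<Rightarrow> real"
  assumes f: "integrable M f"
  shows "ennreal (\<integral>x. f x \<partial>M) \<le> (\<integral>\<^sup>+x. ennreal (f x) \<partial>M)"
proof -
  have "(\<integral>x. f x \<partial>M) \<le> (\<integral>x. max 0 (f x) \<partial>M)"
    using f by (intro integral_mono) auto
  also have "\<dots> = enn2real (\<integral>\<^sup>+x. ennreal (max 0 (f x)) \<partial>M)"
    using f by (intro integral_eq_nn_integral) auto
  also have "(\<integral>\<^sup>+x. ennreal (max 0 (f x)) \<partial>M) = (\<integral>\<^sup>+x. ennreal (f x) \<partial>M)"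
    by (intro nn_integral_cong) simp
  finally have "ennreal (\<integral>x. f x \<partial>M) \<le> ennreal (enn2real (\<integral>\<^sup>+x. ennreal (f x) \<partial>M))"
    by (rule ennreal_leI)
  also have "\<dots> \<le> (\<integral>\<^sup>+x. ennreal (f x) \<partial>M)"
    by (simp add: ennreal_enn2real_if)
  finally show ?thesis .
qed

lemma KL_lower:
  fixes P R :: "'a measure" and b :: "'a \<Rightarrow> real"
  assumes P: "prob_space P" and R: "prob_space R" and sets: "sets P = sets R"
    and b[measurable]: "b \<in> borel_measurable R" and bb: "\<And>x. x \<in> space R \<Longrightarrow> \<bar>b x\<bar> \<le> B"
  shows "ennreal ((\<integral>x. b x \<partial>P) - (\<integral>x. b x \<partial>R) - ((\<integral>x. (b x)^2 \<partial>P) + 2*(\<integral>x. (b x)^2 \<partial>R))/6)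
         \<le> KL_div P R"
proof (cases "absolutely_continuous R P")
  case False
  then show ?thesis by (simp add: KL_div_def)
next
  case ac: True
  interpret R: prob_space R by fact
  interpret P: prob_space P by fact
  define g where "g x = enn2real (RN_deriv R P x)" for x
  have g[measurable]: "g \<in> borel_measurable R" unfolding g_def by measurable
  have dens: "density R (RN_deriv R P) = P" using R.density_RN_deriv[OF ac sets] .
  have fin: "AE x in R. RN_deriv R P x \<noteq> \<infinity>"
    using R.RN_deriv_finite[OF _ ac sets] P.sigma_finite_measure_axioms by blast
  have "density R (\<lambda>x. ennreal (g x)) = density R (RN_deriv R P)"
    unfolding g_def
    by (intro density_cong) (use fin in \<open>auto simp: less_top\<close>)
  hence dens2: "density R (\<lambda>x. ennreal (g x)) = P" using dens by simp
  have gnn: "AE x in R. 0 \<le> g x" by (simp add: g_def)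
  have bP[measurable]: "b \<in> borel_measurable P" using b measurable_cong_sets[OF sets refl] by blast
  have intP: "integrable P h" if [measurable]: "h \<in> borel_measurable R" and hb: "\<And>x. x \<in> space R \<Longrightarrow> \<bar>h x\<bar> \<le> C" for h :: "'a \<Rightarrow> real" and C
  proof -
    have "h \<in> borel_measurable P" using measurable_cong_sets[OF sets refl] that(1) by blast
    moreover have "space P = space R" using sets by (rule sets_eq_imp_space_eq)
    ultimately show ?thesis using hb by (intro P.integrable_const_bound[where B=C]) auto
  qed
  have eqP: "(\<integral>x. h x \<partial>P) = (\<integral>x. g x * h x \<partial>R)" and igP: "integrable R (\<lambda>x. g x * h x)"
    if [measurable]: "h \<in> borel_measurable R" and hb: "\<And>x. x \<in> space R \<Longrightarrow> \<bar>h x\<bar> \<le> C" for h :: "'a \<Rightarrow> real" and C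
  proof -
    show "(\<integral>x. h x \<partial>P) = (\<integral>x. g x * h x \<partial>R)"
      using integral_density[OF that(1) g gnn] dens2 by simp
    show "integrable R (\<lambda>x. g x * h x)"
      using integrable_density[OF that(1) g gnn] dens2 intP[OF that] by simp
  qed
  have intR: "integrable R h" if [measurable]: "h \<in> borel_measurable R" and hb: "\<And>x. x \<in> space R \<Longrightarrow> \<bar>h x\<bar> \<le> C" for h :: "'a \<Rightarrow> real" and C
    using hb by (intro R.integrable_const_bound[where B=C]) auto
  have bb2: "\<bar>(b x)^2\<bar> \<le> B^2" if "x \<in> space R" for x
    using bb[OF that] by (metis abs_le_square_iff abs_power2 abs_ge_zero dual_order.trans power2_abs abs_idempotent abs_abs  abs_of_nonneg)
  have i1: "integrable R (\<lambda>x. g x * b x)" using igP[of b B] bb by auto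
  have i2: "integrable R (\<lambda>x. g x * (b x)^2)" using igP[of "\<lambda>x. (b x)^2" "B^2"] bb2 by auto
  have i3: "integrable R g" using igP[of "\<lambda>x. 1" 1] by auto
  have i4: "integrable R b" using intR[of b B] bb by auto
  have i5: "integrable R (\<lambda>x. (b x)^2)" using intR[of "\<lambda>x. (b x)^2" "B^2"] bb2 by auto
  define r where "r x = g x * b x - b x - (g x * (b x)^2 + 2 * (b x)^2)/6" for x
  have ir: "integrable R r" unfolding r_def using i1 i2 i4 i5 by auto
  have "(\<integral>x. r x \<partial>R) = (\<integral>x. g x * b x \<partial>R) - (\<integral>x. b x \<partial>R) - ((\<integral>x. g x * (b x)^2 \<partial>R) + 2*(\<integral>x. (b x)^2 \<partial>R))/6"
    unfolding r_def using i1 i2 i4 i5 by simp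
  also have "\<dots> = (\<integral>x. b x \<partial>P) - (\<integral>x. b x \<partial>R) - ((\<integral>x. (b x)^2 \<partial>P) + 2*(\<integral>x. (b x)^2 \<partial>R))/6"
    using eqP[of b B] eqP[of "\<lambda>x. (b x)^2" "B^2"] bb bb2 by auto
  finally have req: "(\<integral>x. r x \<partial>R) = \<dots>" .
  have "ennreal (\<integral>x. r x \<partial>R) \<le> (\<integral>\<^sup>+x. ennreal (r x) \<partial>R)" by (rule ennreal_integral_le_nn[OF ir])
  also have "\<dots> \<le> (\<integral>\<^sup>+x. ennreal (g x * ln (g x) - g x + 1) \<partial>R)"
  proof (intro nn_integral_mono ennreal_leI)
    fix x
    have "b x * (g x - 1) - (b x)^2 * (g x + 2)/6 \<le> g x * ln (g x) - g x + 1"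
      by (rule phi_ineq) (simp add: g_def)
    then show "r x \<le> g x * ln (g x) - g x + 1" unfolding r_def by (simp add: algebra_simps)
  qed
  also have "\<dots> = KL_div P R" using ac by (simp add: KL_div_def g_def Let_def)
  finally show ?thesis using req by simp
qed

lemma KL_set:
  fixes P R :: "'a measure"
  assumes P: "prob_space P" and R: "prob_space R" and sets: "sets P = sets R" and A: "A \<in> sets R"
  shows "ennreal (c * (measure P A - measure R A) - c^2/8) \<le> KL_div P R"
proof -
  interpret R: prob_space R by fact
  interpret P: prob_space P by fact
  define b where "b x = c * (indicator A x - 1/2)" for x :: 'a
  have bm: "b \<in> borel_measurable R" unfolding b_def using A by measurable
  have bb: "\<bar>b x\<bar> \<le> \<bar>c\<bar>" for x unfolding b_def by (simp add: abs_mult split: split_indicator)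
  have b2: "(b x)^2 = c^2/4" for x unfolding b_def by (simp split: split_indicator add: power2_eq_square)
  have AP: "A \<in> sets P" using A sets by simp
  have iP: "integrable P (indicator A :: 'a \<Rightarrow> real)"
    using AP by (intro integrable_real_indicator) (auto simp: less_top[symmetric])
  have iR: "integrable R (indicator A :: 'a \<Rightarrow> real)"
    using A by (intro integrable_real_indicator) (auto simp: less_top[symmetric])
  have e1: "(\<integral>x. b x \<partial>P) = c * (measure P A - 1/2)"
    unfolding b_def using AP iP by (simp add: P.prob_space)
  have e2: "(\<integral>x. b x \<partial>R) = c * (measure R A - 1/2)"
    unfolding b_def using A iR by (simp add: R.prob_space)
  have e3: "(\<integral>x. (b x)^2 \<partial>P) = c^2/4" "(\<integral>x. (b x)^2 \<partial>R) = c^2/4"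
    unfolding b2 by (simp_all add: P.prob_space R.prob_space)
  have e: "(\<integral>x. b x \<partial>P) - (\<integral>x. b x \<partial>R) - ((\<integral>x. (b x)^2 \<partial>P) + 2*(\<integral>x. (b x)^2 \<partial>R))/6
      = c * (measure P A - measure R A) - c^2/8"
    unfolding e1 e2 e3 by (simp add: algebra_simps)
  show ?thesis using KL_lower[OF P R sets bm bb] unfolding e .
qed

lemma mix_measure_props:
  fixes M N :: "'a measure"
  assumes M: "prob_space M" and N: "prob_space N" and sets: "sets N = sets M" and a: "0 \<le> a" "a \<le> 1"
  shows "sets (mix_measure a M N) = sets M" "space (mix_measure a M N) = space M"
    "prob_space (mix_measure a M N)"
proof -
  interpret M: prob_space M by fact
  interpret N: prob_space N by fact
  have sa: "sigma_algebra (space M) (sets M)" by (rule sets.sigma_algebra_axioms)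
  show ss: "sets (mix_measure a M N) = sets M"
    unfolding mix_measure_def by (rule sigma_algebra.sets_measure_of_eq[OF sa])
  show sp: "space (mix_measure a M N) = space M"
    unfolding mix_measure_def by (rule sigma_algebra.space_measure_of_eq[OF sa])
  define \<mu> where "\<mu> A = ennreal (1 - a) * emeasure M A + ennreal a * emeasure N A" for A
  have pos: "positive (sets M) \<mu>" unfolding positive_def \<mu>_def by simp
  have ca: "countably_additive (sets M) \<mu>"
  proof (unfold countably_additive_def, intro allI impI)
    fix A :: "nat \<Rightarrow> 'a set" assume A: "range A \<subseteq> sets M" "disjoint_family A"
    have AN: "range A \<subseteq> sets N" using A sets by simp
    have "(\<Sum>i. \<mu> (A i)) = (\<Sum>i. ennreal (1 - a) * emeasure M (A i)) + (\<Sum>i. ennreal a * emeasure N (A i))"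
      unfolding \<mu>_def by (rule suminf_add[symmetric]) auto
    also have "\<dots> = \<mu> (\<Union>i. A i)"
      unfolding \<mu>_def ennreal_suminf_cmult suminf_emeasure[OF A] suminf_emeasure[OF AN A(2)] ..
    finally show "(\<Sum>i. \<mu> (A i)) = \<mu> (\<Union>i. A i)" .
  qed
  have em: "emeasure (mix_measure a M N) X = \<mu> X" if "X \<in> sets M" for X
    unfolding mix_measure_def \<mu>_def[symmetric] by (rule emeasure_measure_of_sigma[OF sa pos ca that])
  show "prob_space (mix_measure a M N)"
  proof (rule prob_spaceI)
    have "space N = space M" using sets by (rule sets_eq_imp_space_eq)
    then have "\<mu> (space M) = ennreal (1 - a) + ennreal a" unfolding \<mu>_def
      using M.emeasure_space_1 N.emeasure_space_1 by simp
    also have "\<dots> = 1" using a by (simp add: ennreal_plus[symmetric] del: ennreal_plus)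
    finally have "\<mu> (space M) = 1" .
    then show "emeasure (mix_measure a M N) (space (mix_measure a M N)) = 1"
      unfolding sp by (simp add: em)
  qed
qed

lemma kernel_facts:
  assumes Q: "Q \<in> M \<rightarrow>\<^sub>M prob_algebra K" and x: "x \<in> space M"
  shows "prob_space (Q x)" "sets (Q x) = sets K"
  using measurable_space[OF Q x] by (auto simp: space_prob_algebra)

lemma pred_law_props:
  fixes Q :: "'h \<times> 'x \<Rightarrow> 'y measure"
  assumes Q: "Q \<in> MH \<Otimes>\<^sub>M N \<rightarrow>\<^sub>M prob_algebra K"
    and P: "prob_space P" "sets P = sets MH" and p: "prob_space p" "sets p = sets N"
  shows "Q \<in> P \<Otimes>\<^sub>M p \<rightarrow>\<^sub>M prob_algebra K"
    and "prob_space (pred_law P p Q)" and "sets (pred_law P p Q) = sets K"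
    and "\<And>A. A \<in> sets K \<Longrightarrow> measure (pred_law P p Q) A = (\<integral>\<omega>. measure (Q \<omega>) A \<partial>(P \<Otimes>\<^sub>M p))"
proof -
  interpret P: prob_space P by fact
  interpret p: prob_space p by fact
  interpret Pp: pair_prob_space P p ..
  have se: "sets (P \<Otimes>\<^sub>M p) = sets (MH \<Otimes>\<^sub>M N)"
    by (rule sets_pair_measure_cong) (use P p in auto)
  show Q': "Q \<in> P \<Otimes>\<^sub>M p \<rightarrow>\<^sub>M prob_algebra K"
    using Q measurable_cong_sets[OF se refl] by blast
  have Qs: "Q \<in> P \<Otimes>\<^sub>M p \<rightarrow>\<^sub>M subprob_algebra K" by (rule measurable_prob_algebraD[OF Q'])
  show "prob_space (pred_law P p Q)"
    unfolding pred_law_def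
    by (rule Pp.prob_space_bind[OF _ Qs]) (use kernel_facts(1)[OF Q'] in auto)
  show "sets (pred_law P p Q) = sets K"
    unfolding pred_law_def
    by (rule sets_bind) (use kernel_facts(2)[OF Q'] Pp.not_empty in auto)
  show "measure (pred_law P p Q) A = (\<integral>\<omega>. measure (Q \<omega>) A \<partial>(P \<Otimes>\<^sub>M p))" if "A \<in> sets K" for A
    unfolding pred_law_def by (rule Pp.measure_bind[OF Qs that])
qed

lemma quad_bound:
  fixes d \<delta> :: real
  assumes "\<And>c. c * d - c^2/8 \<le> \<delta>" "0 \<le> \<delta>"
  shows "\<bar>d\<bar> \<le> sqrt (\<delta>/2)"
proof -
  have "(4*d) * d - (4*d)^2/8 \<le> \<delta>" by (rule assms(1))
  hence "d^2 \<le> \<delta>/2" by (simp add: power2_eq_square algebra_simps)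
  hence "sqrt (d^2) \<le> sqrt (\<delta>/2)" by (rule real_sqrt_le_mono)
  thus ?thesis by simp
qed

lemma term_reg:
  fixes Q :: "'h \<times> 'x \<Rightarrow> 'y measure" and \<eta> :: "'x \<Rightarrow> 'y measure"
  assumes Q: "Q \<in> MH \<Otimes>\<^sub>M N \<rightarrow>\<^sub>M prob_algebra K"
    and eta: "\<eta> \<in> N \<rightarrow>\<^sub>M prob_algebra K"
    and P: "prob_space P" "sets P = sets MH" and p: "prob_space p" "sets p = sets N"
    and reg: "avg_reg_log P p \<eta> Q \<le> ennreal \<delta>" and d0: "0 \<le> \<delta>"
    and A: "A \<in> sets K"
  shows "\<bar>(\<integral>x. measure (\<eta> x) A \<partial>p) - measure (pred_law P p Q) A\<bar> \<le> sqrt (\<delta>/2)"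
proof -
  interpret P: prob_space P by fact
  interpret p: prob_space p by fact
  interpret Pp: pair_prob_space P p ..
  have Q': "Q \<in> P \<Otimes>\<^sub>M p \<rightarrow>\<^sub>M prob_algebra K" by (rule pred_law_props(1)[OF Q P p])
  have eta': "\<eta> \<in> p \<rightarrow>\<^sub>M prob_algebra K" using eta measurable_cong_sets[OF p(2) refl] by blast
  have mQ[measurable]: "(\<lambda>\<omega>. measure (Q \<omega>) A) \<in> borel_measurable (P \<Otimes>\<^sub>M p)"
    by (rule measurable_compose[OF Q' measurable_measure_prob_algebra[OF A]])
  have mE[measurable]: "(\<lambda>x. measure (\<eta> x) A) \<in> borel_measurable p"
    by (rule measurable_compose[OF eta' measurable_measure_prob_algebra[OF A]])
  have mQ2[measurable]: "(\<lambda>x. measure (Q (\<theta>, x)) A) \<in> borel_measurable p" if "\<theta> \<in> space P" for \<theta>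
    using measurable_Pair2[OF mQ that] by simp
  have mQ1[measurable]: "(\<lambda>\<theta>. \<integral>x. measure (Q (\<theta>, x)) A \<partial>p) \<in> borel_measurable P"
    using p.borel_measurable_lebesgue_integral[of "\<lambda>\<theta> x. measure (Q (\<theta>, x)) A" P] mQ by simp
  have bQ: "\<bar>measure (Q \<omega>) A\<bar> \<le> 1" if "\<omega> \<in> space (P \<Otimes>\<^sub>M p)" for \<omega>
    using kernel_facts[OF Q' that] by (simp add: prob_space.prob_le_1)
  have bE: "\<bar>measure (\<eta> x) A\<bar> \<le> 1" if "x \<in> space p" for x
    using kernel_facts[OF eta' that] by (simp add: prob_space.prob_le_1)
  have iQ: "integrable (P \<Otimes>\<^sub>M p) (\<lambda>\<omega>. measure (Q \<omega>) A)"
    using bQ by (intro Pp.P.integrable_const_bound[where B=1]) auto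
  have iE: "integrable p (\<lambda>x. measure (\<eta> x) A)"
    using bE by (intro p.integrable_const_bound[where B=1]) auto
  have iQ2: "integrable p (\<lambda>x. measure (Q (\<theta>, x)) A)" if "\<theta> \<in> space P" for \<theta>
    using bQ that by (intro p.integrable_const_bound[where B=1]) (auto simp: space_pair_measure)
  have iQ1: "integrable P (\<lambda>\<theta>. \<integral>x. measure (Q (\<theta>, x)) A \<partial>p)"
    using Pp.integrable_fst'[OF iQ] by simp
  define \<nu> where "\<nu> = (\<integral>x. measure (\<eta> x) A \<partial>p)"
  have mu: "measure (pred_law P p Q) A = (\<integral>\<theta>. \<integral>x. measure (Q (\<theta>, x)) A \<partial>p \<partial>P)"
    using pred_law_props(4)[OF Q P p A] Pp.integral_fst'[OF iQ] by simp
  show ?thesis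
  proof (fold \<nu>_def, rule quad_bound[OF _ d0])
    fix c :: real
    have "ennreal (c * (\<nu> - measure (pred_law P p Q) A) - c^2/8)
        = ennreal (\<integral>\<theta>. c * (\<nu> - (\<integral>x. measure (Q (\<theta>, x)) A \<partial>p)) - c^2/8 \<partial>P)"
      using iQ1 by (simp add: mu P.prob_space algebra_simps)
    also have "\<dots> \<le> (\<integral>\<^sup>+\<theta>. ennreal (c * (\<nu> - (\<integral>x. measure (Q (\<theta>, x)) A \<partial>p)) - c^2/8) \<partial>P)"
      by (rule ennreal_integral_le_nn) (use iQ1 in auto)
    also have "\<dots> \<le> (\<integral>\<^sup>+\<theta>. (\<integral>\<^sup>+x. ennreal (c * (measure (\<eta> x) A - measure (Q (\<theta>, x)) A) - c^2/8) \<partial>p) \<partial>P)"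
    proof (rule nn_integral_mono)
      fix \<theta> assume th: "\<theta> \<in> space P"
      have "c * (\<nu> - (\<integral>x. measure (Q (\<theta>, x)) A \<partial>p)) - c^2/8
           = (\<integral>x. c * (measure (\<eta> x) A - measure (Q (\<theta>, x)) A) - c^2/8 \<partial>p)"
        using iE iQ2[OF th] by (simp add: \<nu>_def p.prob_space algebra_simps)
      then show "ennreal (c * (\<nu> - (\<integral>x. measure (Q (\<theta>, x)) A \<partial>p)) - c^2/8)
          \<le> (\<integral>\<^sup>+x. ennreal (c * (measure (\<eta> x) A - measure (Q (\<theta>, x)) A) - c^2/8) \<partial>p)"
        using ennreal_integral_le_nn[of p "\<lambda>x. c * (measure (\<eta> x) A - measure (Q (\<theta>, x)) A) - c^2/8"]
          iE iQ2[OF th] by simp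
    qed
    also have "\<dots> \<le> avg_reg_log P p \<eta> Q"
      unfolding avg_reg_log_def
    proof (intro nn_integral_mono)
      fix \<theta> x assume th: "\<theta> \<in> space P" and x: "x \<in> space p"
      have tx: "(\<theta>, x) \<in> space (P \<Otimes>\<^sub>M p)" using th x by (simp add: space_pair_measure)
      show "ennreal (c * (measure (\<eta> x) A - measure (Q (\<theta>, x)) A) - c^2/8) \<le> KL_div (\<eta> x) (Q (\<theta>, x))"
        by (rule KL_set) (use kernel_facts[OF eta' x] kernel_facts[OF Q' tx] A in auto)
    qed
    also have "\<dots> \<le> ennreal \<delta>" by (rule reg)
    finally show "c * (\<nu> - measure (pred_law P p Q) A) - c^2/8 \<le> \<delta>"
      using d0 by (simp add: ennreal_le_iff)
  qed
qed

lemma ind_int: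
  assumes "prob_space M" "A \<in> sets M"
  shows "(\<integral>x. c * (indicator A x - 1/2) \<partial>M) = c * (measure M A - 1/2)"
proof -
  interpret prob_space M by fact
  have i: "integrable M (indicator A :: _ \<Rightarrow> real)"
    using assms(2) by (intro integrable_real_indicator) (auto simp: less_top[symmetric])
  show ?thesis using assms(2) i by (simp add: prob_space)
qed

lemma term_mi:
  fixes \<mu> :: "bool \<Rightarrow> 'y measure" and K :: "'y measure"
  assumes mu: "\<And>z. prob_space (\<mu> z)" "\<And>z. sets (\<mu> z) = sets K"
    and pi: "0 < \<pi>" "\<pi> < 1"
    and J: "J = measure_pmf (bernoulli_pmf \<pi>) \<bind> (\<lambda>z. distr (\<mu> z) (K \<Otimes>\<^sub>M count_space UNIV) (\<lambda>y. (y, z)))"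
    and mi: "KL_div J (distr J K fst \<Otimes>\<^sub>M distr J (count_space UNIV) snd) \<le> ennreal \<epsilon>"
    and A: "A \<in> sets K" and eps: "0 \<le> \<epsilon>"
  shows "\<bar>measure (\<mu> True) A - measure (\<mu> False) A\<bar> \<le> sqrt (\<epsilon> / (2 * \<pi> * (1 - \<pi>)))"
proof -
  define C where "C = (count_space UNIV :: bool measure)"
  define Nk where "Nk z = distr (\<mu> z) (K \<Otimes>\<^sub>M C) (\<lambda>y. (y, z))" for z
  have pair_m: "(\<lambda>y. (y, z)) \<in> \<mu> z \<rightarrow>\<^sub>M K \<Otimes>\<^sub>M C" for z
    by (rule measurable_Pair) (auto simp: measurable_cong_sets[OF mu(2) refl] C_def)
  have Nk_p: "prob_space (Nk z)" "sets (Nk z) = sets (K \<Otimes>\<^sub>M C)" for z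
    unfolding Nk_def using prob_space.prob_space_distr[OF mu(1) pair_m] by auto
  have Nk_m: "Nk \<in> measure_pmf (bernoulli_pmf \<pi>) \<rightarrow>\<^sub>M prob_algebra (K \<Otimes>\<^sub>M C)"
    using Nk_p by (auto simp: space_prob_algebra)
  have Nk_sm: "Nk \<in> measure_pmf (bernoulli_pmf \<pi>) \<rightarrow>\<^sub>M subprob_algebra (K \<Otimes>\<^sub>M C)"
    by (rule measurable_prob_algebraD[OF Nk_m])
  have JN: "J = measure_pmf (bernoulli_pmf \<pi>) \<bind> Nk" unfolding J Nk_def C_def ..
  have Jp: "prob_space J" unfolding JN
    by (rule measure_pmf.prob_space_bind[OF _ Nk_sm]) (use Nk_p in auto)
  have Js: "sets J = sets (K \<Otimes>\<^sub>M C)" unfolding JN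
    by (rule sets_bind) (use Nk_p in auto)
  interpret J: prob_space J by fact
  have pi01: "0 \<le> \<pi>" "\<pi> \<le> 1" using pi by auto
  have key: "(\<integral>\<omega>. h \<omega> \<partial>J) = \<pi> * (\<integral>y. h (y, True) \<partial>\<mu> True) + (1 - \<pi>) * (\<integral>y. h (y, False) \<partial>\<mu> False)"
    if hm: "h \<in> borel_measurable (K \<Otimes>\<^sub>M C)" and hb: "\<And>\<omega>. \<bar>h \<omega>\<bar> \<le> B" for h :: "'y \<times> bool \<Rightarrow> real" and B
  proof -
    have "(\<integral>\<omega>. h \<omega> \<partial>J) = (\<integral>z. (\<integral>\<omega>. h \<omega> \<partial>Nk z) \<partial>measure_pmf (bernoulli_pmf \<pi>))"
      unfolding JN
      by (rule integral_bind[OF hm _ Nk_sm, where B=B and B'=1])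
         (use hb Nk_p in \<open>auto intro!: prob_space_imp_subprob_space simp: prob_space.emeasure_space_1 measure_pmf.finite_measure_axioms\<close>)
    also have "\<dots> = (\<integral>z. (\<integral>y. h (y, z) \<partial>\<mu> z) \<partial>measure_pmf (bernoulli_pmf \<pi>))"
      unfolding Nk_def by (subst integral_distr[OF pair_m hm]) simp
    also have "\<dots> = \<pi> * (\<integral>y. h (y, True) \<partial>\<mu> True) + (1 - \<pi>) * (\<integral>y. h (y, False) \<partial>\<mu> False)"
      using pi01 by (simp add: algebra_simps)
    finally show ?thesis .
  qed
  define JY where "JY = distr J K fst"
  define JZ where "JZ = distr J C snd"
  have fstm: "fst \<in> J \<rightarrow>\<^sub>M K" using measurable_cong_sets[OF Js refl] by auto
  have sndm: "snd \<in> J \<rightarrow>\<^sub>M C" using measurable_cong_sets[OF Js refl] by (auto simp: C_def)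
  have JYp: "prob_space JY" unfolding JY_def by (rule J.prob_space_distr[OF fstm])
  have JZp: "prob_space JZ" unfolding JZ_def by (rule J.prob_space_distr[OF sndm])
  interpret JY: prob_space JY by fact
  interpret JZ: prob_space JZ by fact
  interpret M: pair_prob_space JY JZ ..
  define M where "M = JY \<Otimes>\<^sub>M JZ"
  have Mp: "prob_space M" unfolding M_def by (rule M.P.prob_space_axioms)
  have Ms: "sets M = sets (K \<Otimes>\<^sub>M C)" unfolding M_def
    by (rule sets_pair_measure_cong) (auto simp: JY_def JZ_def)
  have JZint: "(\<integral>z. g z \<partial>JZ) = \<pi> * g True + (1 - \<pi>) * g False" for g :: "bool \<Rightarrow> real"
  proof -
    have "(\<integral>z. g z \<partial>JZ) = (\<integral>\<omega>. g (snd \<omega>) \<partial>J)"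
      unfolding JZ_def by (rule integral_distr[OF sndm]) (simp add: C_def)
    also have "\<dots> = \<pi> * (\<integral>y. g True \<partial>\<mu> True) + (1 - \<pi>) * (\<integral>y. g False \<partial>\<mu> False)"
    proof -
      have gb: "\<bar>g (snd \<omega>)\<bar> \<le> \<bar>g True\<bar> + \<bar>g False\<bar>" for \<omega> :: "'y \<times> bool" by (cases "snd \<omega>") auto
      show ?thesis using key[of "\<lambda>\<omega>. g (snd \<omega>)" "\<bar>g True\<bar> + \<bar>g False\<bar>"] gb by (simp add: C_def)
    qed
    also have "\<dots> = \<pi> * g True + (1 - \<pi>) * g False"
      using mu(1) by (simp add: prob_space.prob_space)
    finally show ?thesis .
  qed
  define a1 where "a1 = measure (\<mu> True) A"
  define a0 where "a0 = measure (\<mu> False) A"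
  define T where "T = a1 - a0"
  define cf where "cf z = (if z then 4 * (1 - \<pi>) * T else - 4 * \<pi> * T)" for z
  define b where "b \<omega> = cf (snd \<omega>) * (indicator A (fst \<omega>) - 1/2)" for \<omega> :: "'y \<times> bool"
  have m1: "(\<lambda>\<omega>. cf (snd \<omega>)) \<in> borel_measurable (K \<Otimes>\<^sub>M C)"
    by (rule measurable_compose[OF measurable_snd]) (simp add: C_def)
  have m2: "(\<lambda>\<omega>. indicator A (fst \<omega>) - 1/2 :: real) \<in> borel_measurable (K \<Otimes>\<^sub>M C)"
    using A by measurable
  have bm: "b \<in> borel_measurable (K \<Otimes>\<^sub>M C)" unfolding b_def using m1 m2 by (rule borel_measurable_times)
  have bmM: "b \<in> borel_measurable M" using bm measurable_cong_sets[OF Ms refl] by blast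
  have bb: "\<bar>b \<omega>\<bar> \<le> \<bar>cf True\<bar> + \<bar>cf False\<bar>" for \<omega>
    unfolding b_def by (cases "snd \<omega>") (auto simp: abs_mult split: split_indicator)
  have b2: "(b \<omega>)^2 = (cf (snd \<omega>))^2 / 4" for \<omega>
    unfolding b_def by (simp split: split_indicator add: power2_eq_square)
  have AM: "A \<in> sets (\<mu> z)" for z using A mu(2) by simp
  have bJ: "(\<integral>\<omega>. b \<omega> \<partial>J) = \<pi> * (cf True * (a1 - 1/2)) + (1 - \<pi>) * (cf False * (a0 - 1/2))"
    by (subst key[OF bm bb]) (simp add: b_def ind_int[OF mu(1) AM, where c=1, simplified] a1_def a0_def)
  have cf2: "(cf z)^2 \<le> (cf True)^2 + (cf False)^2" for z by (cases z) auto
  have b2J: "(\<integral>\<omega>. (b \<omega>)^2 \<partial>J) = \<pi> * ((cf True)^2/4) + (1 - \<pi>) * ((cf False)^2/4)"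
    unfolding b2 using mu(1) cf2 by (subst key[of "\<lambda>\<omega>. (cf (snd \<omega>))^2 / 4" "(cf True)^2/4 + (cf False)^2/4"])
       (auto simp: C_def prob_space.prob_space split: bool.split)
  have iM: "integrable M h" if "h \<in> borel_measurable M" "\<And>\<omega>. \<bar>h \<omega>\<bar> \<le> B" for h :: "_ \<Rightarrow> real" and B
    using that unfolding M_def by (intro M.P.integrable_const_bound[where B=B]) auto
  have cf0: "\<pi> * cf True + (1 - \<pi>) * cf False = 0" unfolding cf_def by (simp add: algebra_simps)
  have bM: "(\<integral>\<omega>. b \<omega> \<partial>M) = 0"
  proof -
    have "(\<integral>\<omega>. b \<omega> \<partial>M) = (\<integral>y. (\<integral>z. b (y, z) \<partial>JZ) \<partial>JY)"
      unfolding M_def by (rule M.integral_fst'[symmetric]) (use iM[OF bmM bb] in \<open>simp add: M_def\<close>)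
    also have "\<dots> = (\<integral>y. 0 \<partial>JY)"
    proof (rule Bochner_Integration.integral_cong[OF refl])
      fix y
      have "(\<integral>z. b (y, z) \<partial>JZ) = (\<pi> * cf True + (1 - \<pi>) * cf False) * (indicator A y - 1/2)"
        unfolding b_def by (subst JZint) (cases "y \<in> A"; simp add: field_simps)
      then show "(\<integral>z. b (y, z) \<partial>JZ) = 0" using cf0 by simp
    qed
    finally show ?thesis by simp
  qed
  have b2M: "(\<integral>\<omega>. (b \<omega>)^2 \<partial>M) = \<pi> * ((cf True)^2/4) + (1 - \<pi>) * ((cf False)^2/4)"
  proof -
    have m2: "(\<lambda>\<omega>. (b \<omega>)^2) \<in> borel_measurable M" using bmM by measurable
    have bb2: "\<bar>(b \<omega>)^2\<bar> \<le> (cf True)^2/4 + (cf False)^2/4" for \<omega>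
      unfolding b2 by (cases "snd \<omega>") auto
    have "(\<integral>\<omega>. (b \<omega>)^2 \<partial>M) = (\<integral>y. (\<integral>z. (b (y, z))^2 \<partial>JZ) \<partial>JY)"
      unfolding M_def by (rule M.integral_fst'[symmetric]) (use iM[OF m2 bb2] in \<open>simp add: M_def\<close>)
    also have "\<dots> = (\<integral>y. \<pi> * ((cf True)^2/4) + (1 - \<pi>) * ((cf False)^2/4) \<partial>JY)"
      unfolding b2 by (simp add: JZint)
    also have "\<dots> = \<pi> * ((cf True)^2/4) + (1 - \<pi>) * ((cf False)^2/4)"
      by (simp add: JY.prob_space)
    finally show ?thesis .
  qed
  have Jsets: "sets J = sets M" using Js Ms by simp
  have "ennreal ((\<integral>x. b x \<partial>J) - (\<integral>x. b x \<partial>M) - ((\<integral>x. (b x)^2 \<partial>J) + 2*(\<integral>x. (b x)^2 \<partial>M))/6) \<le> KL_div J M"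
    by (rule KL_lower[OF Jp Mp Jsets bmM bb])
  also have "KL_div J M \<le> ennreal \<epsilon>" using mi by (simp add: M_def JY_def JZ_def C_def)
  finally have le: "(\<integral>x. b x \<partial>J) - (\<integral>x. b x \<partial>M) - ((\<integral>x. (b x)^2 \<partial>J) + 2*(\<integral>x. (b x)^2 \<partial>M))/6 \<le> \<epsilon>"
    using eps by simp
  have "(\<integral>x. b x \<partial>J) - (\<integral>x. b x \<partial>M) - ((\<integral>x. (b x)^2 \<partial>J) + 2*(\<integral>x. (b x)^2 \<partial>M))/6
      = 2 * \<pi> * (1 - \<pi>) * T^2"
    unfolding bJ bM b2J b2M cf_def T_def by (simp add: power2_eq_square field_simps; algebra)
  with le have "2 * \<pi> * (1 - \<pi>) * T^2 \<le> \<epsilon>" by simp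
  moreover have pp: "0 < 2 * \<pi> * (1 - \<pi>)" using pi by simp
  ultimately have "T^2 \<le> \<epsilon> / (2 * \<pi> * (1 - \<pi>))" by (simp add: field_simps)
  hence "sqrt (T^2) \<le> sqrt (\<epsilon> / (2 * \<pi> * (1 - \<pi>)))" by (rule real_sqrt_le_mono)
  thus ?thesis by (simp add: T_def a1_def a0_def)
qed

lemma TV_upper:
  assumes "prob_space P" "prob_space R" "A \<in> sets P"
  shows "\<bar>measure P A - measure R A\<bar> \<le> TV P R"
  unfolding TV_def
proof (rule cSUP_upper[OF assms(3)])
  show "bdd_above ((\<lambda>A. \<bar>measure P A - measure R A\<bar>) ` sets P)"
  proof (rule bdd_aboveI2)
    fix B
    have "measure P B \<le> 1" "measure R B \<le> 1"
      using assms(1,2) by (simp_all add: prob_space.prob_le_1)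
    then show "\<bar>measure P B - measure R B\<bar> \<le> 1"
      using measure_nonneg[of P B] measure_nonneg[of R B] by (simp only: abs_le_iff) linarith
  qed
qed

theorem mainTheorem2:
  fixes pr pu :: "('x::polish_space) measure"
    and \<eta> :: "'x \<Rightarrow> ('y::polish_space) measure"
    and MH :: "'h measure"
    and Q :: "'h \<times> 'x \<Rightarrow> 'y measure"
    and Pu Pr :: "'h measure"
    and \<alpha> \<pi> \<delta> \<delta>g \<epsilon>u :: real
  assumes pr: "prob_space pr" "sets pr = sets (borel :: 'x measure)"
    and pu: "prob_space pu" "sets pu = sets (borel :: 'x measure)"
    and eta: "\<eta> \<in> (borel :: 'x measure) \<rightarrow>\<^sub>M prob_algebra (borel :: 'y measure)"
    and alpha: "0 < \<alpha>" "\<alpha> \<le> 1"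
    and Q: "Q \<in> MH \<Otimes>\<^sub>M (borel :: 'x measure) \<rightarrow>\<^sub>M prob_algebra (borel :: 'y measure)"
    and Pu: "prob_space Pu" "sets Pu = sets MH"
    and Pr: "prob_space Pr" "sets Pr = sets MH"
    and pi: "0 < \<pi>" "\<pi> < 1"
    and nonneg: "0 \<le> \<delta>" "0 \<le> \<delta>g" "0 \<le> \<epsilon>u"
    and reg_u: "avg_reg_log Pu pr \<eta> Q \<le> ennreal \<delta>"
    and reg_r: "avg_reg_log Pr pr \<eta> Q \<le> ennreal \<delta>g"
    and mi: "mutual_info (borel :: 'y measure) (count_space UNIV)
               (margin_joint \<pi> Pu pr (mix_measure \<alpha> pr pu) borel Q) \<le> ennreal \<epsilon>u"
  shows "TV (pred_law Pu (mix_measure \<alpha> pr pu) Q) (pred_law Pr (mix_measure \<alpha> pr pu) Q)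
           \<le> sqrt (1/2) * (sqrt \<delta> + sqrt \<delta>g) + sqrt (\<epsilon>u / (2 * \<pi> * (1 - \<pi>)))
             + TV (pred_law Pr pr Q) (pred_law Pr (mix_measure \<alpha> pr pu) Q)"
proof -
  define pd where "pd = mix_measure \<alpha> pr pu"
  have pus: "sets pu = sets pr" using pu pr by simp
  have pd: "prob_space pd" "sets pd = sets (borel :: 'x measure)"
    using mix_measure_props[OF pr(1) pu(1) pus, of \<alpha>] alpha pr(2) by (auto simp: pd_def)
  define ud where "ud = pred_law Pu pd Q"
  define rd where "rd = pred_law Pr pd Q"
  define ur where "ur = pred_law Pu pr Q"
  define rr where "rr = pred_law Pr pr Q"
  note ud = pred_law_props[OF Q Pu pd, folded ud_def]
  note rd = pred_law_props[OF Q Pr pd, folded rd_def]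
  note ur = pred_law_props[OF Q Pu pr, folded ur_def]
  note rr = pred_law_props[OF Q Pr pr, folded rr_def]
  define \<nu> where "\<nu> A = (\<integral>x. measure (\<eta> x) A \<partial>pr)" for A
  define R where "R = sqrt (1/2) * (sqrt \<delta> + sqrt \<delta>g) + sqrt (\<epsilon>u / (2 * \<pi> * (1 - \<pi>))) + TV rr rd"
  have "TV ud rd \<le> R"
    unfolding TV_def
  proof (rule cSUP_least)
    show "sets ud \<noteq> {}" using sets.empty_sets by blast
    fix A assume A: "A \<in> sets ud"
    have Ab: "A \<in> sets (borel :: 'y measure)" using A ud(3) by simp
    have t1: "\<bar>measure ur A - measure ud A\<bar> \<le> sqrt (\<epsilon>u / (2 * \<pi> * (1 - \<pi>)))"
    proof -
      define \<mu> where "\<mu> z = pred_law Pu (if z then pr else pd) Q" for z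
      have mu: "prob_space (\<mu> z)" "sets (\<mu> z) = sets (borel :: 'y measure)" for z
        unfolding \<mu>_def by (cases z; simp add: ur[unfolded ur_def] ud[unfolded ud_def])+
      have "\<bar>measure (\<mu> True) A - measure (\<mu> False) A\<bar> \<le> sqrt (\<epsilon>u / (2 * \<pi> * (1 - \<pi>)))"
        by (rule term_mi[OF mu pi refl _ Ab nonneg(3)])
           (use mi in \<open>simp only: mutual_info_def margin_joint_def \<mu>_def pd_def\<close>)
      then show ?thesis by (simp add: \<mu>_def ur_def ud_def)
    qed
    have t2: "\<bar>\<nu> A - measure ur A\<bar> \<le> sqrt (\<delta>/2)"
      unfolding \<nu>_def ur_def by (rule term_reg[OF Q eta Pu pr reg_u nonneg(1) Ab])
    have t3: "\<bar>\<nu> A - measure rr A\<bar> \<le> sqrt (\<delta>g/2)"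
      unfolding \<nu>_def rr_def by (rule term_reg[OF Q eta Pr pr reg_r nonneg(2) Ab])
    have t4: "\<bar>measure rr A - measure rd A\<bar> \<le> TV rr rd"
      by (rule TV_upper[OF rr(2) rd(2)]) (use Ab rr(3) in simp)
    have sq: "sqrt (1/2) * (sqrt \<delta> + sqrt \<delta>g) = sqrt (\<delta>/2) + sqrt (\<delta>g/2)"
      by (simp add: real_sqrt_divide add_divide_distrib)
    show "\<bar>measure ud A - measure rd A\<bar> \<le> R"
      unfolding R_def sq using t1 t2 t3 t4 by linarith
  qed
  then show ?thesis by (simp add: R_def ud_def rd_def rr_def pd_def)
qed

end
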